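(* Let $m\ge 1$ and let $X\subset\mathbb{N}_0^m$ be a finite lower set of $(\mathbb{N}_0^m,\preceq)$ with $|X|=p$. Then the $p\times p$ generalized Vandermonde matrix $V(X,X)$, whose rows are indexed by the points $\boldsymbol{x}\in X$ (viewed as points of $\mathbb{R}^m$) and whose columns are indexed by the exponents $\boldsymbol{\alpha}\in X$, with entries $\boldsymbol{x}^{\boldsymbol{\alpha}}$, is invertible.
   Context: $\preceq$ is the componentwise (product) order on $\mathbb{N}_0^m$: $\boldsymbol{y}\preceq\boldsymbol{x}$ iff $y_j\le x_j$ for all $j$. A lower set is a nonempty subset $I\subseteq\mathbb{N}_0^m$ such that $\boldsymbol{x}\in I$ and $\boldsymbol{y}\preceq\boldsymbol{x}$ imply $\boldsymbol{y}\in I$. For $\boldsymbol{x}\in\mathbb{R}^m$ and $\boldsymbol{\alpha}\in\mathbb{N}_0^m$, $\boldsymbol{x}^{\boldsymbol{\alpha}}=x_1^{\alpha_1}\cdots x_m^{\alpha_m}$ with the convention $0^0=1$. *)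

theory Defs
  imports Main "HOL.Real"
begin

text \<open>Points of N_0^m are represented as lists of naturals of length m.\<close>

definition prec :: "nat list \<Rightarrow> nat list \<Rightarrow> bool" where
  "prec y x \<longleftrightarrow> length y = length x \<and> (\<forall>j<length x. y ! j \<le> x ! j)"

definition lower_set :: "nat \<Rightarrow> nat list set \<Rightarrow> bool" where
  "lower_set m I \<longleftrightarrow> I \<noteq> {} \<and> I \<subseteq> {x. length x = m} \<and>
     (\<forall>x\<in>I. \<forall>y. length y = m \<and> prec y x \<longrightarrow> y \<in> I)"

text \<open>x^alpha = prod_j x_j^alpha_j, with the point x viewed in R^m (note 0^0 = 1).\<close>
definition mono_pow :: "nat list \<Rightarrow> nat list \<Rightarrow> real" where
  "mono_pow x \<alpha> = (\<Prod>j<length x. (real (x ! j)) ^ (\<alpha> ! j))"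

text \<open>Generalized Vandermonde matrix V(X,A): rows indexed by x in X, columns by alpha in A.\<close>
definition gen_vandermonde :: "nat list \<Rightarrow> nat list \<Rightarrow> real" where
  "gen_vandermonde x \<alpha> = mono_pow x \<alpha>"

definition invertible_on :: "'a set \<Rightarrow> ('a \<Rightarrow> 'a \<Rightarrow> real) \<Rightarrow> bool" where
  "invertible_on S A \<longleftrightarrow> (\<exists>W.
      (\<forall>r\<in>S. \<forall>c\<in>S. (\<Sum>k\<in>S. A r k * W k c) = (if r = c then 1 else 0)) \<and>
      (\<forall>r\<in>S. \<forall>c\<in>S. (\<Sum>k\<in>S. W r k * A k c) = (if r = c then 1 else 0)))"

end

theory Submission
  imports Defs "HOL-Library.FuncSet" "HOL-Combinatorics.Stirling"
begin

lemma triple_swap: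
  fixes A B C D :: "'a \<Rightarrow> 'a \<Rightarrow> real"
  assumes "finite S"
  shows "(\<Sum>k\<in>S. (\<Sum>l\<in>S. A r l * B l k) * (\<Sum>i\<in>S. C k i * D i c))
       = (\<Sum>l\<in>S. \<Sum>i\<in>S. A r l * (\<Sum>k\<in>S. B l k * C k i) * D i c)"
proof -
  have "(\<Sum>k\<in>S. (\<Sum>l\<in>S. A r l * B l k) * (\<Sum>i\<in>S. C k i * D i c))
      = (\<Sum>k\<in>S. \<Sum>l\<in>S. \<Sum>i\<in>S. A r l * B l k * (C k i * D i c))"
    by (simp add: sum_product)
  also have "\<dots> = (\<Sum>l\<in>S. \<Sum>k\<in>S. \<Sum>i\<in>S. A r l * B l k * (C k i * D i c))"
    by (rule sum.swap)
  also have "\<dots> = (\<Sum>l\<in>S. \<Sum>i\<in>S. \<Sum>k\<in>S. A r l * B l k * (C k i * D i c))"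
    by (rule sum.cong[OF refl], rule sum.swap)
  also have "\<dots> = (\<Sum>l\<in>S. \<Sum>i\<in>S. A r l * (\<Sum>k\<in>S. B l k * C k i) * D i c)"
    by (intro sum.cong refl) (simp add: sum_distrib_left sum_distrib_right mult.assoc mult.left_commute)
  finally show ?thesis .
qed

lemma delta_sum:
  fixes A D :: "'a \<Rightarrow> 'a \<Rightarrow> real"
  assumes "finite S"
  shows "(\<Sum>l\<in>S. \<Sum>i\<in>S. A r l * (if l = i then 1 else 0) * D i c) = (\<Sum>l\<in>S. A r l * D l c)"
proof (rule sum.cong[OF refl])
  fix l assume "l \<in> S"
  have "(\<Sum>i\<in>S. A r l * (if l = i then 1 else 0) * D i c) = (\<Sum>i\<in>S. if l = i then A r l * D i c else 0)"
    by (intro sum.cong refl) auto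
  also have "\<dots> = A r l * D l c" using assms \<open>l \<in> S\<close> by (simp add: sum.delta)
  finally show "(\<Sum>i\<in>S. A r l * (if l = i then 1 else 0) * D i c) = A r l * D l c" .
qed

lemma inv_transpose:
  assumes "invertible_on S A"
  shows "invertible_on S (\<lambda>r c. A c r)"
proof -
  from assms obtain W where W1: "\<forall>r\<in>S. \<forall>c\<in>S. (\<Sum>k\<in>S. A r k * W k c) = (if r = c then 1 else 0)"
    and W2: "\<forall>r\<in>S. \<forall>c\<in>S. (\<Sum>k\<in>S. W r k * A k c) = (if r = c then 1 else 0)"
    unfolding invertible_on_def by blast
  show ?thesis unfolding invertible_on_def
  proof (intro exI[of _ "\<lambda>r c. W c r"] conjI ballI)
    fix r c assume "r \<in> S" "c \<in> S"
    then show "(\<Sum>k\<in>S. A k r * W c k) = (if r = c then 1 else 0)"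
      using W2 by (auto simp: mult.commute)
    show "(\<Sum>k\<in>S. W k r * A c k) = (if r = c then 1 else 0)"
      using W1 \<open>r \<in> S\<close> \<open>c \<in> S\<close> by (auto simp: mult.commute)
  qed
qed

lemma inv_empty: "invertible_on {} A"
  unfolding invertible_on_def by simp

lemma inv_product:
  assumes "finite S" "invertible_on S A" "invertible_on S B"
    and C: "\<forall>r\<in>S. \<forall>c\<in>S. C r c = (\<Sum>k\<in>S. A r k * B k c)"
  shows "invertible_on S C"
proof -
  from assms(2) obtain WA where A1: "\<forall>r\<in>S. \<forall>c\<in>S. (\<Sum>k\<in>S. A r k * WA k c) = (if r = c then 1 else 0)"
    and A2: "\<forall>r\<in>S. \<forall>c\<in>S. (\<Sum>k\<in>S. WA r k * A k c) = (if r = c then 1 else 0)"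
    unfolding invertible_on_def by blast
  from assms(3) obtain WB where B1: "\<forall>r\<in>S. \<forall>c\<in>S. (\<Sum>k\<in>S. B r k * WB k c) = (if r = c then 1 else 0)"
    and B2: "\<forall>r\<in>S. \<forall>c\<in>S. (\<Sum>k\<in>S. WB r k * B k c) = (if r = c then 1 else 0)"
    unfolding invertible_on_def by blast
  define W where "W r c = (\<Sum>k\<in>S. WB r k * WA k c)" for r c
  show ?thesis unfolding invertible_on_def
  proof (intro exI[of _ W] conjI ballI)
    fix r c assume r: "r \<in> S" and c: "c \<in> S"
    have "(\<Sum>k\<in>S. C r k * W k c) = (\<Sum>k\<in>S. (\<Sum>l\<in>S. A r l * B l k) * (\<Sum>i\<in>S. WB k i * WA i c))"
      using C r by (simp add: W_def)
    also have "\<dots> = (\<Sum>l\<in>S. \<Sum>i\<in>S. A r l * (\<Sum>k\<in>S. B l k * WB k i) * WA i c)"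
      by (rule triple_swap[OF \<open>finite S\<close>])
    also have "\<dots> = (\<Sum>l\<in>S. \<Sum>i\<in>S. A r l * (if l = i then 1 else 0) * WA i c)"
      using B1 by (intro sum.cong refl) auto
    also have "\<dots> = (\<Sum>l\<in>S. A r l * WA l c)"
      by (rule delta_sum[OF \<open>finite S\<close>])
    also have "\<dots> = (if r = c then 1 else 0)" using A1 r c by auto
    finally show "(\<Sum>k\<in>S. C r k * W k c) = (if r = c then 1 else 0)" .
  next
    fix r c assume r: "r \<in> S" and c: "c \<in> S"
    have "(\<Sum>k\<in>S. W r k * C k c) = (\<Sum>k\<in>S. (\<Sum>i\<in>S. WB r i * WA i k) * (\<Sum>l\<in>S. A k l * B l c))"
      using C c by (simp add: W_def)
    also have "\<dots> = (\<Sum>i\<in>S. \<Sum>l\<in>S. WB r i * (\<Sum>k\<in>S. WA i k * A k l) * B l c)"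
      by (rule triple_swap[OF \<open>finite S\<close>])
    also have "\<dots> = (\<Sum>i\<in>S. \<Sum>l\<in>S. WB r i * (if i = l then 1 else 0) * B l c)"
      using A2 by (intro sum.cong refl) auto
    also have "\<dots> = (\<Sum>i\<in>S. WB r i * B i c)"
      by (rule delta_sum[OF \<open>finite S\<close>])
    also have "\<dots> = (if r = c then 1 else 0)" using B2 r c by auto
    finally show "(\<Sum>k\<in>S. W r k * C k c) = (if r = c then 1 else 0)" .
  qed
qed

lemma inv_border:
  assumes fin: "finite S" and s: "s \<in> S" and inv: "invertible_on (S - {s}) A"
    and col: "\<forall>r\<in>S - {s}. A r s = 0" and d: "A s s \<noteq> 0"
  shows "invertible_on S A"
proof -
  define S' where "S' = S - {s}"
  have fin': "finite S'" using fin by (simp add: S'_def)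
  have sS': "s \<notin> S'" by (simp add: S'_def)
  from inv obtain V where V1: "\<forall>r\<in>S'. \<forall>c\<in>S'. (\<Sum>k\<in>S'. A r k * V k c) = (if r = c then 1 else 0)"
    and V2: "\<forall>r\<in>S'. \<forall>c\<in>S'. (\<Sum>k\<in>S'. V r k * A k c) = (if r = c then 1 else 0)"
    unfolding invertible_on_def S'_def by blast
  define W where "W r c = (if r = s then (if c = s then 1 / A s s else - (\<Sum>k\<in>S'. A s k * V k c) / A s s)
      else (if c = s then 0 else V r c))" for r c
  have split: "\<And>g. sum g S = g s + sum g S'"
    using fin s by (simp add: S'_def sum.remove)
  have Ws: "\<And>k c. k \<in> S' \<Longrightarrow> W k c = (if c = s then 0 else V k c)"
    using sS' by (auto simp: W_def)
  show ?thesis unfolding invertible_on_def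
  proof (intro exI[of _ W] conjI ballI)
    fix r c assume r: "r \<in> S" and c: "c \<in> S"
    have e: "(\<Sum>k\<in>S. A r k * W k c) = A r s * W s c + (\<Sum>k\<in>S'. A r k * (if c = s then 0 else V k c))"
      by (simp add: split Ws cong: sum.cong)
    show "(\<Sum>k\<in>S. A r k * W k c) = (if r = c then 1 else 0)"
    proof (cases "r = s")
      case True
      show ?thesis
      proof (cases "c = s")
        case True
        then show ?thesis using e \<open>r = s\<close> d by (simp add: W_def)
      next
        case False
        then have "c \<in> S'" using c by (simp add: S'_def)
        then show ?thesis using e \<open>r = s\<close> d False by (simp add: W_def)
      qed
    next
      case False
      then have r': "r \<in> S'" using r by (simp add: S'_def)
      then have "A r s = 0" using col by (simp add: S'_def)
      show ?thesis
      proof (cases "c = s")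
        case True
        then show ?thesis using e \<open>A r s = 0\<close> False by simp
      next
        case cs: False
        then have "c \<in> S'" using c by (simp add: S'_def)
        then show ?thesis using e \<open>A r s = 0\<close> cs V1 r' by simp
      qed
    qed
  next
    fix r c assume r: "r \<in> S" and c: "c \<in> S"
    have e: "(\<Sum>k\<in>S. W r k * A k c) = W r s * A s c + (\<Sum>k\<in>S'. W r k * A k c)"
      by (simp add: split)
    show "(\<Sum>k\<in>S. W r k * A k c) = (if r = c then 1 else 0)"
    proof (cases "r = s")
      case True
      show ?thesis
      proof (cases "c = s")
        case True
        have "(\<Sum>k\<in>S'. W r k * A k c) = 0"
          using col \<open>c = s\<close> by (intro sum.neutral) (auto simp: S'_def)
        then show ?thesis using e \<open>r = s\<close> True d by (simp add: W_def)
      next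
        case False
        then have c': "c \<in> S'" using c by (simp add: S'_def)
        have "(\<Sum>k\<in>S'. W r k * A k c) = (\<Sum>k\<in>S'. - (\<Sum>l\<in>S'. A s l * V l k) / A s s * A k c)"
          using \<open>r = s\<close> sS' by (intro sum.cong refl) (auto simp: W_def)
        also have "\<dots> = - (\<Sum>l\<in>S'. A s l * (\<Sum>k\<in>S'. V l k * A k c)) / A s s"
        proof -
          have "(\<Sum>k\<in>S'. - (\<Sum>l\<in>S'. A s l * V l k) / A s s * A k c)
              = - (\<Sum>k\<in>S'. \<Sum>l\<in>S'. A s l * V l k * A k c) / A s s"
            by (simp add: sum_distrib_right sum_divide_distrib sum_negf)
          also have "(\<Sum>k\<in>S'. \<Sum>l\<in>S'. A s l * V l k * A k c) = (\<Sum>l\<in>S'. \<Sum>k\<in>S'. A s l * V l k * A k c)"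
            by (rule sum.swap)
          also have "\<dots> = (\<Sum>l\<in>S'. A s l * (\<Sum>k\<in>S'. V l k * A k c))"
            by (simp add: sum_distrib_left mult.assoc)
          finally show ?thesis .
        qed
        also have "\<dots> = - (\<Sum>l\<in>S'. A s l * (if l = c then 1 else 0)) / A s s"
          using V2 c' by (simp cong: sum.cong)
        also have "\<dots> = - A s c / A s s"
          using c' fin' by (simp add: if_distrib cong: if_cong)
        finally show ?thesis using e \<open>r = s\<close> False d by (simp add: W_def)
      qed
    next
      case False
      then have r': "r \<in> S'" using r by (simp add: S'_def)
      have "W r s = 0" using False by (simp add: W_def)
      have e2: "(\<Sum>k\<in>S'. W r k * A k c) = (\<Sum>k\<in>S'. V r k * A k c)"
        using False sS' by (intro sum.cong refl) (auto simp: W_def)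
      show ?thesis
      proof (cases "c = s")
        case True
        have "(\<Sum>k\<in>S'. V r k * A k c) = 0"
          using col True by (intro sum.neutral) (auto simp: S'_def)
        then show ?thesis using e e2 \<open>W r s = 0\<close> True False by simp
      next
        case cs: False
        then have "c \<in> S'" using c by (simp add: S'_def)
        then show ?thesis using e e2 \<open>W r s = 0\<close> V2 r' by simp
      qed
    qed
  qed
qed

lemma inv_triangular:
  fixes f :: "'a \<Rightarrow> nat"
  assumes fin: "finite S"
    and tri: "\<forall>r\<in>S. \<forall>c\<in>S. r \<noteq> c \<and> A r c \<noteq> 0 \<longrightarrow> f c < f r"
    and diag: "\<forall>s\<in>S. A s s \<noteq> 0"
  shows "invertible_on S A"
  using fin
proof (induction S rule: finite_remove_induct)
  case empty
  then show ?case by (rule inv_empty)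
next
  case (remove T)
  have ne: "f ` T \<noteq> {}" and fi: "finite (f ` T)" using remove by auto
  obtain s where s: "s \<in> T" "f s = Max (f ` T)" using Max_in[OF fi ne] by auto
  have le: "\<And>t. t \<in> T \<Longrightarrow> f t \<le> f s" using s fi by simp
  show ?case
  proof (rule inv_border[OF remove(1) s(1) remove(4)[OF s(1)]])
    show "\<forall>r\<in>T - {s}. A r s = 0"
    proof
      fix r assume r: "r \<in> T - {s}"
      show "A r s = 0"
      proof (rule ccontr)
        assume "A r s \<noteq> 0"
        then have "f s < f r" using tri r s remove(3) by blast
        with le[of r] r show False by simp
      qed
    qed
    show "A s s \<noteq> 0" using diag s remove(3) by blast
  qed
qed

definition ff :: "nat \<Rightarrow> real \<Rightarrow> real" where
  "ff k x = (\<Prod>i<k. x - real i)"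

lemma ff_Suc: "ff (Suc k) x = ff k x * (x - real k)"
  by (simp add: ff_def)

lemma ff_zero: "a < k \<Longrightarrow> ff k (real a) = 0"
  unfolding ff_def by (rule prod_zero) auto

lemma ff_same: "ff a (real a) \<noteq> 0"
  unfolding ff_def by (subst prod_zero_iff) auto

lemma pow_stirling: "x ^ n = (\<Sum>k\<le>n. real (Stirling n k) * ff k x)"
proof (induction n)
  case 0
  then show ?case by (simp add: ff_def)
next
  case (Suc n)
  define h where "h k = real k * real (Stirling n k) * ff k x" for k
  have h1: "(\<Sum>k\<le>n. h (Suc k)) = (\<Sum>k\<le>n. h k)"
  proof -
    have "(\<Sum>k\<le>Suc n. h k) = h 0 + (\<Sum>k\<le>n. h (Suc k))" by (rule sum.atMost_Suc_shift)
    moreover have "(\<Sum>k\<le>Suc n. h k) = (\<Sum>k\<le>n. h k) + h (Suc n)" by simp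
    moreover have "h 0 = 0" "h (Suc n) = 0" by (simp_all add: h_def)
    ultimately show ?thesis by simp
  qed
  have "x ^ Suc n = (\<Sum>k\<le>n. real (Stirling n k) * (x * ff k x))"
    by (simp add: Suc sum_distrib_left mult.left_commute)
  also have "\<dots> = (\<Sum>k\<le>n. real (Stirling n k) * ff (Suc k) x) + (\<Sum>k\<le>n. h k)"
    unfolding sum.distrib[symmetric] by (intro sum.cong refl) (simp add: ff_Suc h_def algebra_simps)
  also have "\<dots> = (\<Sum>k\<le>n. real (Stirling n k) * ff (Suc k) x) + (\<Sum>k\<le>n. h (Suc k))"
    by (simp add: h1)
  also have "\<dots> = (\<Sum>k\<le>n. real (Stirling (Suc n) (Suc k)) * ff (Suc k) x)"
    unfolding sum.distrib[symmetric] by (intro sum.cong refl) (simp add: h_def algebra_simps)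
  also have "\<dots> = (\<Sum>k\<le>Suc n. real (Stirling (Suc n) k) * ff k x)"
    by (subst sum.atMost_Suc_shift) simp
  finally show ?case .
qed

definition FF :: "nat \<Rightarrow> nat list \<Rightarrow> nat list \<Rightarrow> real" where
  "FF m x b = (\<Prod>j<m. ff (b ! j) (real (x ! j)))"

definition TT :: "nat \<Rightarrow> nat list \<Rightarrow> nat list \<Rightarrow> real" where
  "TT m b a = (\<Prod>j<m. real (Stirling (a ! j) (b ! j)))"

lemma prec_sum_less:
  assumes "prec b a" "b \<noteq> a"
  shows "sum_list b < sum_list a"
proof -
  have len: "length b = length a" and le: "\<forall>j<length a. b ! j \<le> a ! j"
    using assms(1) by (auto simp: prec_def)
  have "\<exists>j<length a. b ! j \<noteq> a ! j"
  proof (rule ccontr)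
    assume "\<not> (\<exists>j<length a. b ! j \<noteq> a ! j)"
    then have "b = a" using len by (intro nth_equalityI) auto
    with assms(2) show False by simp
  qed
  then obtain j where j: "j < length a" "b ! j \<noteq> a ! j" by blast
  have "(\<Sum>i<length a. b ! i) < (\<Sum>i<length a. a ! i)"
  proof (rule sum_strict_mono_ex1)
    show "finite {..<length a}" by simp
    show "\<forall>x\<in>{..<length a}. b ! x \<le> a ! x" using le by auto
    have "b ! j < a ! j" using j le by (simp add: order_le_neq_trans)
    then show "\<exists>x\<in>{..<length a}. b ! x < a ! x" using j(1) by blast
  qed
  then show ?thesis using len by (simp add: sum_list_sum_nth atLeast0LessThan)
qed

lemma FF_nz:
  assumes "length x = m" "length b = m" "FF m x b \<noteq> 0"
  shows "prec b x"
proof (rule ccontr)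
  assume "\<not> prec b x"
  then obtain j where j: "j < m" "x ! j < b ! j" using assms by (auto simp: prec_def not_le)
  then have "FF m x b = 0" unfolding FF_def by (intro prod_zero) (auto intro!: bexI[of _ j] ff_zero)
  with assms show False by simp
qed

lemma FF_diag: "FF m x x \<noteq> 0"
  unfolding FF_def using ff_same by (subst prod_zero_iff) auto

lemma TT_nz:
  assumes "length a = m" "length b = m" "TT m b a \<noteq> 0"
  shows "prec b a"
proof (rule ccontr)
  assume "\<not> prec b a"
  then obtain j where j: "j < m" "a ! j < b ! j" using assms by (auto simp: prec_def not_le)
  then have "TT m b a = 0" unfolding TT_def by (intro prod_zero) (auto intro!: bexI[of _ j])
  with assms show False by simp
qed

lemma TT_diag: "TT m a a \<noteq> 0"
  unfolding TT_def by simp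

lemma factor_identity:
  assumes fin: "finite X" and low: "lower_set m X" and x: "x \<in> X" and a: "a \<in> X"
  shows "gen_vandermonde x a = (\<Sum>b\<in>X. FF m x b * TT m b a)"
proof -
  have lx: "length x = m" and la: "length a = m" using low x a by (auto simp: lower_set_def)
  define B where "B = {b. length b = m \<and> prec b a}"
  have "gen_vandermonde x a = (\<Prod>j<m. real (x ! j) ^ (a ! j))"
    by (simp add: gen_vandermonde_def mono_pow_def lx)
  also have "\<dots> = (\<Prod>j<m. \<Sum>k\<le>a ! j. real (Stirling (a ! j) k) * ff k (real (x ! j)))"
    by (simp add: pow_stirling)
  also have "\<dots> = (\<Sum>g\<in>PiE {..<m} (\<lambda>j. {..a ! j}). \<Prod>j<m. real (Stirling (a ! j) (g j)) * ff (g j) (real (x ! j)))"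
    by (rule prod_sum_PiE) auto
  also have "\<dots> = (\<Sum>b\<in>B. \<Prod>j<m. real (Stirling (a ! j) (b ! j)) * ff (b ! j) (real (x ! j)))"
  proof (rule sum.reindex_bij_witness[of _ "\<lambda>b. restrict (\<lambda>k. b ! k) {..<m}" "\<lambda>g. map g [0..<m]"])
    fix g assume g: "g \<in> PiE {..<m} (\<lambda>j. {..a ! j})"
    show "restrict (\<lambda>k. map g [0..<m] ! k) {..<m} = g"
      using g by (auto simp: PiE_def extensional_def restrict_def fun_eq_iff)
    show "map g [0..<m] \<in> B"
      using g la by (auto simp: B_def prec_def PiE_def Pi_def)
    show "(\<Prod>j<m. real (Stirling (a ! j) (map g [0..<m] ! j)) * ff (map g [0..<m] ! j) (real (x ! j))) =
          (\<Prod>j<m. real (Stirling (a ! j) (g j)) * ff (g j) (real (x ! j)))"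
      by (intro prod.cong refl) auto
  next
    fix b assume b: "b \<in> B"
    show "map (restrict (\<lambda>k. b ! k) {..<m}) [0..<m] = b"
      using b by (auto simp: B_def intro: nth_equalityI)
    show "restrict (\<lambda>k. b ! k) {..<m} \<in> PiE {..<m} (\<lambda>j. {..a ! j})"
      using b la by (auto simp: B_def prec_def)
  qed
  also have "\<dots> = (\<Sum>b\<in>B. FF m x b * TT m b a)"
    by (simp add: FF_def TT_def prod.distrib[symmetric] mult.commute)
  also have "\<dots> = (\<Sum>b\<in>X. FF m x b * TT m b a)"
  proof (rule sum.mono_neutral_left[OF fin])
    show "B \<subseteq> X" using low a la by (auto simp: B_def lower_set_def)
    show "\<forall>b\<in>X - B. FF m x b * TT m b a = 0"
    proof
      fix b assume b: "b \<in> X - B"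
      then have lb: "length b = m" using low by (auto simp: lower_set_def)
      have "TT m b a = 0" using TT_nz[OF la lb] b lb by (auto simp: B_def)
      then show "FF m x b * TT m b a = 0" by simp
    qed
  qed
  finally show ?thesis .
qed

theorem proposition1:
  fixes m p :: nat and X :: "nat list set"
  assumes "m \<ge> 1"
    and "finite X"
    and "lower_set m X"
    and "card X = p"
  shows "invertible_on X gen_vandermonde"
proof -
  have len: "\<And>y. y \<in> X \<Longrightarrow> length y = m" using assms(3) by (auto simp: lower_set_def)
  have iF: "invertible_on X (FF m)"
  proof (rule inv_triangular[OF assms(2), where f = sum_list])
    show "\<forall>r\<in>X. \<forall>c\<in>X. r \<noteq> c \<and> FF m r c \<noteq> 0 \<longrightarrow> sum_list c < sum_list r"
    proof (intro ballI impI)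
      fix r c assume r: "r \<in> X" and c: "c \<in> X" and h: "r \<noteq> c \<and> FF m r c \<noteq> 0"
      have "prec c r" using FF_nz[OF len[OF r] len[OF c]] h by blast
      then show "sum_list c < sum_list r" using prec_sum_less h by blast
    qed
    show "\<forall>s\<in>X. FF m s s \<noteq> 0" using FF_diag by blast
  qed
  have iT': "invertible_on X (\<lambda>r c. TT m c r)"
  proof (rule inv_triangular[OF assms(2), where f = sum_list])
    show "\<forall>r\<in>X. \<forall>c\<in>X. r \<noteq> c \<and> TT m c r \<noteq> 0 \<longrightarrow> sum_list c < sum_list r"
    proof (intro ballI impI)
      fix r c assume r: "r \<in> X" and c: "c \<in> X" and h: "r \<noteq> c \<and> TT m c r \<noteq> 0"
      have "prec c r" using TT_nz[OF len[OF r] len[OF c]] h by blast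
      then show "sum_list c < sum_list r" using prec_sum_less h by blast
    qed
    show "\<forall>s\<in>X. TT m s s \<noteq> 0" using TT_diag by blast
  qed
  have iT: "invertible_on X (TT m)"
    using inv_transpose[OF iT'] by simp
  show ?thesis
    using factor_identity[OF assms(2,3)] by (intro inv_product[OF assms(2) iF iT]) blast
qed

end
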